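(* Let $\mathcal L=(\Sigma,X)$ be a language, $\Lambda$ a fuzzy theory in $\mathcal L$ and $\phi$ a formula of $\mathcal L$. Then $\mathcal A\vDash\phi$ for every $\Sigma$-algebra $\mathcal A$ that is a model of $\Lambda$ if and only if $\vdash_\Lambda\phi$.
   Context: $H$ is a frame with bottom $\bot$. An $H$-fuzzy set is a pair $(A,\mu_A)$ of a set $A$ and a function $\mu_A:A\to H$; an arrow $f:(A,\mu_A)\to(B,\mu_B)$ is a function with $\mu_A(x)\le\mu_B(f(x))$; they form $\mathbf{Fuz}_H$. For $n\ge1$, $(A,\mu_A)^n=(A^n,\mu)$ with $\mu(a_1,\dots,a_n)=\bigwedge_i\mu_A(a_i)$. A signature $\Sigma=(O,\mathrm{ar},C)$ consists of a set $O$ of operation symbols with arity $\mathrm{ar}:O\to\{1,2,3,\dots\}$ and a set $C$ of constant symbols. A language is a pair $\mathcal L=(\Sigma,X)$ with $X$ a set of variables. $\mathrm{Terms}(\mathcal L)$ is the smallest set containing $X\sqcup C$ and containing $f(t_1,\dots,t_{\mathrm{ar}(f)})$ whenever $f\in O$ and all $t_i\in\mathrm{Terms}(\mathcal L)$. A formula is either an equation $s\equiv t$ ($s,t$ terms) or a membership proposition $\mathsf E_l(t)$ with $l\in H$ and $t$ a term. A sequent $\Gamma\vdash\psi$ is a pair of a (possibly infinite) set $\Gamma$ of formulas and a formula $\psi$; $\vdash\psi$ means $\emptyset\vdash\psi$. A fuzzy theory in $\mathcal L$ is a set of sequents. For $\sigma:X\to\mathrm{Terms}(\mathcal L)$, $t[\sigma]$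 is simultaneous substitution, extended to formulas by $(s\equiv t)[\sigma]=(s[\sigma]\equiv t[\sigma])$, $\mathsf E_l(t)[\sigma]=\mathsf E_l(t[\sigma])$, and to sets of formulas elementwise. The rules of the fuzzy sequent calculus are (for all sets of formulas $\Gamma,\Delta,\Phi$, formulas $\phi,\psi$, terms, $l,l'\in H$): (A) $\Gamma\vdash\phi$ if $\phi\in\Gamma$; (Weak) from $\Gamma\vdash\phi$ infer $\Gamma\cup\Delta\vdash\phi$; (Cut) from $\Gamma\vdash\phi$ for all $\phi\in\Phi$ and $\Phi\vdash\psi$ infer $\Gamma\vdash\psi$; (Refl) $\Gamma\vdash s\equiv s$; (Sym) from $\Gamma\vdash s\equiv t$ infer $\Gamma\vdash t\equiv s$; (Trans) from $\Gamma\vdash s\equiv t$ and $\Gamma\vdash t\equiv u$ infer $\Gamma\vdash s\equiv u$; (Sub) from $\Gamma\vdash\psi$ infer $\Gamma[\sigma]\vdash\psi[\sigma]$ for any $\sigma:X\to\mathrm{Terms}(\mathcal L)$; (Cong) for $f\in O$ with $n=\mathrm{ar}(f)$, from $\Gamma\vdash t_i\equiv s_i$ ($i=1,\dots,n$) infer $\Gamma\vdash f(t_1,\dots,t_n)\equiv f(s_1,\dots,s_n)$; (Inf) $\Gamma\vdash\mathsf E_\bot(t)$; (Mon) from $\Gamma\vdash\mathsf E_l(t)$ infer $\Gamma\vdash\mathsf E_{l\wedge l'}(t)$; (Exp) for $f\in O$ with $n=\mathrm{ar}(f)$, from $\Gamma\vdash\mathsf E_{l_i}(t_i)$ ($i=1,\dots,n$)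 infer $\Gamma\vdash\mathsf E_{l_1\wedge\dots\wedge l_n}(f(t_1,\dots,t_n))$; (Sup) for $S\subseteq H$, from $\Gamma\vdash\mathsf E_l(t)$ for all $l\in S$ infer $\Gamma\vdash\mathsf E_{\sup S}(t)$; (Fun) from $\Gamma\vdash t\equiv s$ and $\Gamma\vdash\mathsf E_l(t)$ infer $\Gamma\vdash\mathsf E_l(s)$. The deductive closure $\Lambda^{\vdash}$ of a theory $\Lambda$ is the smallest set of sequents containing $\Lambda$ and closed under all these rules; $\vdash_\Lambda\phi$ means $(\emptyset\vdash\phi)\in\Lambda^{\vdash}$. A $\Sigma$-algebra $\mathcal A=((A,\mu_A),\Sigma^{\mathcal A})$ is an $H$-fuzzy set $(A,\mu_A)$ together with, for each $f\in O$, an arrow $f^{\mathcal A}:(A,\mu_A)^{\mathrm{ar}(f)}\to(A,\mu_A)$ of $\mathbf{Fuz}_H$ and, for each $c\in C$, an element $c^{\mathcal A}\in A$. An assignment is a function $\iota:X\to A$; evaluation: $x^{\mathcal A,\iota}=\iota(x)$, $c^{\mathcal A,\iota}=c^{\mathcal A}$, $f(t_1,\dots,t_n)^{\mathcal A,\iota}=f^{\mathcal A}(t_1^{\mathcal A,\iota},\dots,t_n^{\mathcal A,\iota})$. $\mathcal A\vDash_\iota s\equiv t$ iff $s^{\mathcal A,\iota}=t^{\mathcal A,\iota}$; $\mathcal A\vDash_\iota\mathsf E_l(t)$ iff $l\le\mu_A(t^{\mathcal A,\iota})$; $\mathcal A\vDash\phi$ iff $\mathcal A\vDash_\iota\phi$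 for all assignments $\iota$. $\mathcal A$ satisfies $\Gamma\vdash\psi$ if for every assignment $\iota$ with $\mathcal A\vDash_\iota\phi$ for all $\phi\in\Gamma$ one has $\mathcal A\vDash_\iota\psi$. $\mathcal A$ is a model of a theory $\Lambda$ if it satisfies every sequent of $\Lambda$. *)

theory Defs
  imports Main
begin

definition is_frame :: "'h::complete_lattice itself \<Rightarrow> bool" where
  "is_frame _ \<longleftrightarrow> (\<forall>(a::'h) S. inf a (Sup S) = Sup (inf a ` S))"

datatype ('f,'c,'v) trm = Var 'v | Cst 'c | App 'f "('f,'c,'v) trm list"

datatype ('h,'f,'c,'v) fml = Eqn "('f,'c,'v) trm" "('f,'c,'v) trm"
                           | Mem 'h "('f,'c,'v) trm"

text \<open>A language: operation symbols Ops with arity ar, constants C, variables X.\<close>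

inductive_set Terms :: "'f set \<Rightarrow> ('f \<Rightarrow> nat) \<Rightarrow> 'c set \<Rightarrow> 'v set \<Rightarrow> ('f,'c,'v) trm set"
  for Ops ar C X where
  TVar: "x \<in> X \<Longrightarrow> Var x \<in> Terms Ops ar C X"
| TCst: "c \<in> C \<Longrightarrow> Cst c \<in> Terms Ops ar C X"
| TApp: "f \<in> Ops \<Longrightarrow> length ts = ar f \<Longrightarrow> (\<forall>t\<in>set ts. t \<in> Terms Ops ar C X)
          \<Longrightarrow> App f ts \<in> Terms Ops ar C X"

definition Fmls :: "'f set \<Rightarrow> ('f \<Rightarrow> nat) \<Rightarrow> 'c set \<Rightarrow> 'v set \<Rightarrow> ('h,'f,'c,'v) fml set" where
  "Fmls Ops ar C X = {Eqn s t | s t. s \<in> Terms Ops ar C X \<and> t \<in> Terms Ops ar C X}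
                 \<union> {Mem l t | l t. t \<in> Terms Ops ar C X}"

definition fuzzy_theory ::
  "'f set \<Rightarrow> ('f \<Rightarrow> nat) \<Rightarrow> 'c set \<Rightarrow> 'v set \<Rightarrow> (('h,'f,'c,'v) fml set \<times> ('h,'f,'c,'v) fml) set \<Rightarrow> bool" where
  "fuzzy_theory Ops ar C X \<Lambda> \<longleftrightarrow>
     (\<forall>(\<Gamma>,\<psi>)\<in>\<Lambda>. \<Gamma> \<subseteq> Fmls Ops ar C X \<and> \<psi> \<in> Fmls Ops ar C X)"

primrec tsubst :: "('v \<Rightarrow> ('f,'c,'v) trm) \<Rightarrow> ('f,'c,'v) trm \<Rightarrow> ('f,'c,'v) trm" where
  "tsubst \<sigma> (Var x) = \<sigma> x"
| "tsubst \<sigma> (Cst c) = Cst c"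
| "tsubst \<sigma> (App f ts) = App f (map (tsubst \<sigma>) ts)"

fun fsubst :: "('v \<Rightarrow> ('f,'c,'v) trm) \<Rightarrow> ('h,'f,'c,'v) fml \<Rightarrow> ('h,'f,'c,'v) fml" where
  "fsubst \<sigma> (Eqn s t) = Eqn (tsubst \<sigma> s) (tsubst \<sigma> t)"
| "fsubst \<sigma> (Mem l t) = Mem l (tsubst \<sigma> t)"

inductive_set deriv ::
  "'f set \<Rightarrow> ('f \<Rightarrow> nat) \<Rightarrow> 'c set \<Rightarrow> 'v set \<Rightarrow> (('h::complete_lattice,'f,'c,'v) fml set \<times> ('h,'f,'c,'v) fml) set
   \<Rightarrow> (('h,'f,'c,'v) fml set \<times> ('h,'f,'c,'v) fml) set"
  for Ops ar C X \<Lambda> where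
  Ax: "s \<in> \<Lambda> \<Longrightarrow> s \<in> deriv Ops ar C X \<Lambda>"
| A: "\<Gamma> \<subseteq> Fmls Ops ar C X \<Longrightarrow> \<phi> \<in> \<Gamma> \<Longrightarrow> (\<Gamma>, \<phi>) \<in> deriv Ops ar C X \<Lambda>"
| Weak: "(\<Gamma>, \<phi>) \<in> deriv Ops ar C X \<Lambda> \<Longrightarrow> \<Delta> \<subseteq> Fmls Ops ar C X \<Longrightarrow> (\<Gamma> \<union> \<Delta>, \<phi>) \<in> deriv Ops ar C X \<Lambda>"
| Cut: "\<Gamma> \<subseteq> Fmls Ops ar C X \<Longrightarrow> (\<forall>\<phi>\<in>\<Phi>. (\<Gamma>, \<phi>) \<in> deriv Ops ar C X \<Lambda>) \<Longrightarrow> (\<Phi>, \<psi>) \<in> deriv Ops ar C X \<Lambda>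
        \<Longrightarrow> (\<Gamma>, \<psi>) \<in> deriv Ops ar C X \<Lambda>"
| Refl: "\<Gamma> \<subseteq> Fmls Ops ar C X \<Longrightarrow> s \<in> Terms Ops ar C X \<Longrightarrow> (\<Gamma>, Eqn s s) \<in> deriv Ops ar C X \<Lambda>"
| Sym: "(\<Gamma>, Eqn s t) \<in> deriv Ops ar C X \<Lambda> \<Longrightarrow> (\<Gamma>, Eqn t s) \<in> deriv Ops ar C X \<Lambda>"
| Trans: "(\<Gamma>, Eqn s t) \<in> deriv Ops ar C X \<Lambda> \<Longrightarrow> (\<Gamma>, Eqn t u) \<in> deriv Ops ar C X \<Lambda>
          \<Longrightarrow> (\<Gamma>, Eqn s u) \<in> deriv Ops ar C X \<Lambda>"
| Sub: "(\<Gamma>, \<psi>) \<in> deriv Ops ar C X \<Lambda> \<Longrightarrow> (\<forall>x\<in>X. \<sigma> x \<in> Terms Ops ar C X)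
        \<Longrightarrow> (fsubst \<sigma> ` \<Gamma>, fsubst \<sigma> \<psi>) \<in> deriv Ops ar C X \<Lambda>"
| Cong: "f \<in> Ops \<Longrightarrow> length ts = ar f \<Longrightarrow> length ss = ar f
         \<Longrightarrow> (\<forall>i<ar f. (\<Gamma>, Eqn (ts ! i) (ss ! i)) \<in> deriv Ops ar C X \<Lambda>)
         \<Longrightarrow> (\<Gamma>, Eqn (App f ts) (App f ss)) \<in> deriv Ops ar C X \<Lambda>"
| Inf: "\<Gamma> \<subseteq> Fmls Ops ar C X \<Longrightarrow> t \<in> Terms Ops ar C X \<Longrightarrow> (\<Gamma>, Mem bot t) \<in> deriv Ops ar C X \<Lambda>"
| Mon: "(\<Gamma>, Mem l t) \<in> deriv Ops ar C X \<Lambda> \<Longrightarrow> (\<Gamma>, Mem (inf l l') t) \<in> deriv Ops ar C X \<Lambda>"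
| Exp: "f \<in> Ops \<Longrightarrow> length ts = ar f \<Longrightarrow> length ls = ar f
        \<Longrightarrow> (\<forall>i<ar f. (\<Gamma>, Mem (ls ! i) (ts ! i)) \<in> deriv Ops ar C X \<Lambda>)
        \<Longrightarrow> (\<Gamma>, Mem (Inf (set ls)) (App f ts)) \<in> deriv Ops ar C X \<Lambda>"
| Sup: "\<Gamma> \<subseteq> Fmls Ops ar C X \<Longrightarrow> t \<in> Terms Ops ar C X
        \<Longrightarrow> (\<forall>l\<in>S. (\<Gamma>, Mem l t) \<in> deriv Ops ar C X \<Lambda>)
        \<Longrightarrow> (\<Gamma>, Mem (Sup S) t) \<in> deriv Ops ar C X \<Lambda>"
| Fun: "(\<Gamma>, Eqn t s) \<in> deriv Ops ar C X \<Lambda> \<Longrightarrow> (\<Gamma>, Mem l t) \<in> deriv Ops ar C X \<Lambda>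
        \<Longrightarrow> (\<Gamma>, Mem l s) \<in> deriv Ops ar C X \<Lambda>"

record ('a,'h,'f,'c) alg =
  carrier :: "'a set"
  memb :: "'a \<Rightarrow> 'h"
  oper :: "'f \<Rightarrow> 'a list \<Rightarrow> 'a"
  cnst :: "'c \<Rightarrow> 'a"

text \<open>Sigma-algebra: each f is an arrow (A,mu)^ar(f) -> (A,mu) of Fuz_H
  (the membership of a tuple being the meet of the memberships; ar f >= 1),
  each constant an element of A.\<close>
definition is_algebra :: "'f set \<Rightarrow> ('f \<Rightarrow> nat) \<Rightarrow> 'c set \<Rightarrow> ('a,'h::complete_lattice,'f,'c) alg \<Rightarrow> bool" where
  "is_algebra Ops ar C \<A> \<longleftrightarrow>
     (\<forall>f\<in>Ops. \<forall>as. length as = ar f \<and> set as \<subseteq> carrier \<A> \<longrightarrow>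
          oper \<A> f as \<in> carrier \<A> \<and> Inf (memb \<A> ` set as) \<le> memb \<A> (oper \<A> f as))
   \<and> (\<forall>c\<in>C. cnst \<A> c \<in> carrier \<A>)"

primrec eval :: "('a,'h,'f,'c) alg \<Rightarrow> ('v \<Rightarrow> 'a) \<Rightarrow> ('f,'c,'v) trm \<Rightarrow> 'a" where
  "eval \<A> \<iota> (Var x) = \<iota> x"
| "eval \<A> \<iota> (Cst c) = cnst \<A> c"
| "eval \<A> \<iota> (App f ts) = oper \<A> f (map (eval \<A> \<iota>) ts)"

fun holds :: "('a,'h::complete_lattice,'f,'c) alg \<Rightarrow> ('v \<Rightarrow> 'a) \<Rightarrow> ('h,'f,'c,'v) fml \<Rightarrow> bool" where
  "holds \<A> \<iota> (Eqn s t) \<longleftrightarrow> eval \<A> \<iota> s = eval \<A> \<iota> t"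
| "holds \<A> \<iota> (Mem l t) \<longleftrightarrow> l \<le> memb \<A> (eval \<A> \<iota> t)"

text \<open>Assignments: functions X -> A (values outside X are irrelevant).\<close>
definition assignment :: "'v set \<Rightarrow> ('a,'h,'f,'c) alg \<Rightarrow> ('v \<Rightarrow> 'a) \<Rightarrow> bool" where
  "assignment X \<A> \<iota> \<longleftrightarrow> (\<forall>x\<in>X. \<iota> x \<in> carrier \<A>)"

definition valid :: "'v set \<Rightarrow> ('a,'h::complete_lattice,'f,'c) alg \<Rightarrow> ('h,'f,'c,'v) fml \<Rightarrow> bool" where
  "valid X \<A> \<phi> \<longleftrightarrow> (\<forall>\<iota>. assignment X \<A> \<iota> \<longrightarrow> holds \<A> \<iota> \<phi>)"

definition satisfies_seq :: "'v set \<Rightarrow> ('a,'h::complete_lattice,'f,'c) alg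
    \<Rightarrow> ('h,'f,'c,'v) fml set \<times> ('h,'f,'c,'v) fml \<Rightarrow> bool" where
  "satisfies_seq X \<A> sq \<longleftrightarrow>
     (\<forall>\<iota>. assignment X \<A> \<iota> \<longrightarrow> (\<forall>\<phi>\<in>fst sq. holds \<A> \<iota> \<phi>) \<longrightarrow> holds \<A> \<iota> (snd sq))"

definition is_model :: "'f set \<Rightarrow> ('f \<Rightarrow> nat) \<Rightarrow> 'c set \<Rightarrow> 'v set \<Rightarrow> ('a,'h::complete_lattice,'f,'c) alg
    \<Rightarrow> (('h,'f,'c,'v) fml set \<times> ('h,'f,'c,'v) fml) set \<Rightarrow> bool" where
  "is_model Ops ar C X \<A> \<Lambda> \<longleftrightarrow> is_algebra Ops ar C \<A> \<and> (\<forall>sq\<in>\<Lambda>. satisfies_seq X \<A> sq)"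

end

theory Submission
  imports Defs
begin

lemma Fmls_Eqn[simp]: "Eqn s t \<in> Fmls Ops ar C X \<longleftrightarrow> s \<in> Terms Ops ar C X \<and> t \<in> Terms Ops ar C X"
  by (auto simp: Fmls_def)

lemma Fmls_Mem[simp]: "Mem l t \<in> Fmls Ops ar C X \<longleftrightarrow> t \<in> Terms Ops ar C X"
  by (auto simp: Fmls_def)

lemma tsubst_Terms: "t \<in> Terms Ops ar C X \<Longrightarrow> \<forall>x\<in>X. \<sigma> x \<in> Terms Ops ar C X
   \<Longrightarrow> tsubst \<sigma> t \<in> Terms Ops ar C X"
proof (induction t rule: Terms.induct)
  case (TApp f ts)
  then show ?case unfolding tsubst.simps by (intro Terms.TApp) auto
qed (auto intro: Terms.intros)

lemma fsubst_Fmls: "\<phi> \<in> Fmls Ops ar C X \<Longrightarrow> \<forall>x\<in>X. \<sigma> x \<in> Terms Ops ar C X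
   \<Longrightarrow> fsubst \<sigma> \<phi> \<in> Fmls Ops ar C X"
  by (cases \<phi>) (auto intro: tsubst_Terms)

lemma App_Terms: "f \<in> Ops \<Longrightarrow> length ts = ar f \<Longrightarrow> (\<forall>i<ar f. ts ! i \<in> Terms Ops ar C X)
   \<Longrightarrow> App f ts \<in> Terms Ops ar C X"
  by (rule TApp) (auto simp: in_set_conv_nth)

lemma deriv_Fmls0:
  assumes ft: "fuzzy_theory Ops ar C X \<Lambda>"
    and "sq \<in> deriv Ops ar C X \<Lambda>"
  shows "snd sq \<in> Fmls Ops ar C X"
  using assms(2)
proof (induction rule: deriv.induct)
  case (Ax a)
  then show ?case using ft unfolding fuzzy_theory_def by auto
next
  case (Sub \<Gamma> \<psi> \<sigma>)
  then show ?case by (simp add: fsubst_Fmls)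
next
  case (Cong f ts ss \<Gamma>)
  then show ?case by (auto intro!: App_Terms)
next
  case (Exp f ts ls \<Gamma>)
  then show ?case by (auto intro!: App_Terms)
qed auto

lemma deriv_Fmls:
  assumes ft: "fuzzy_theory Ops ar C X \<Lambda>"
    and "(\<Gamma>, \<psi>) \<in> deriv Ops ar C X \<Lambda>"
  shows "\<psi> \<in> Fmls Ops ar C X"
  using deriv_Fmls0[OF assms] by simp

lemma eval_carrier:
  assumes "is_algebra Ops ar C A" "assignment X A \<iota>" "t \<in> Terms Ops ar C X"
  shows "eval A \<iota> t \<in> carrier A"
  using assms(3)
proof (induction rule: Terms.induct)
  case (TVar x) then show ?case using assms(2) by (auto simp: assignment_def)
next
  case (TCst c) then show ?case using assms(1) by (auto simp: is_algebra_def)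
next
  case (TApp f ts)
  have "set (map (eval A \<iota>) ts) \<subseteq> carrier A" using TApp by auto
  then show ?case using assms(1) TApp unfolding is_algebra_def by auto
qed

lemma eval_tsubst: "eval A \<iota> (tsubst \<sigma> t) = eval A (\<lambda>x. eval A \<iota> (\<sigma> x)) t"
  by (induction t) (auto cong: map_cong)

lemma holds_fsubst: "holds A \<iota> (fsubst \<sigma> \<phi>) = holds A (\<lambda>x. eval A \<iota> (\<sigma> x)) \<phi>"
  by (cases \<phi>) (auto simp: eval_tsubst)

lemma sound0:
  assumes ft: "fuzzy_theory Ops ar C X \<Lambda>" and M: "is_model Ops ar C X A \<Lambda>"
    and "sq \<in> deriv Ops ar C X \<Lambda>"
  shows "\<forall>\<iota>. assignment X A \<iota> \<longrightarrow> (\<forall>\<phi>\<in>fst sq. holds A \<iota> \<phi>) \<longrightarrow> holds A \<iota> (snd sq)"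
  using assms(3)
proof (induction rule: deriv.induct)
  case (Ax sq)
  then show ?case using M unfolding is_model_def satisfies_seq_def by fastforce
next
  case (Cut \<Gamma> \<Phi> \<psi>)
  then show ?case by fastforce
next
  case (Sub \<Gamma> \<psi> \<sigma>)
  have alg: "is_algebra Ops ar C A" using M by (simp add: is_model_def)
  show ?case
  proof (intro allI impI)
    fix \<iota> assume a: "assignment X A \<iota>" and g: "\<forall>\<phi>\<in>fst (fsubst \<sigma> ` \<Gamma>, fsubst \<sigma> \<psi>). holds A \<iota> \<phi>"
    have "assignment X A (\<lambda>x. eval A \<iota> (\<sigma> x))"
      using Sub.hyps(2) a alg eval_carrier unfolding assignment_def by blast
    then show "holds A \<iota> (snd (fsubst \<sigma> ` \<Gamma>, fsubst \<sigma> \<psi>))"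
      using Sub.IH g by (auto simp: holds_fsubst)
  qed
next
  case (Cong f ts ss \<Gamma>)
  show ?case
  proof (intro allI impI)
    fix \<iota> assume a: "assignment X A \<iota>" and g: "\<forall>\<phi>\<in>fst (\<Gamma>, Eqn (App f ts) (App f ss)). holds A \<iota> \<phi>"
    have "map (eval A \<iota>) ts = map (eval A \<iota>) ss"
      using Cong a g by (auto intro: nth_equalityI)
    then show "holds A \<iota> (snd (\<Gamma>, Eqn (App f ts) (App f ss)))" by simp
  qed
next
  case (Mon \<Gamma> l t l')
  then show ?case by (auto intro: le_infI1)
next
  case (Exp f ts ls \<Gamma>)
  have alg: "is_algebra Ops ar C A" using M by (simp add: is_model_def)
  have tT: "\<forall>i<ar f. ts ! i \<in> Terms Ops ar C X"
    using Exp.IH deriv_Fmls[OF ft] by fastforce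
  show ?case
  proof (intro allI impI)
    fix \<iota> assume a: "assignment X A \<iota>" and g: "\<forall>\<phi>\<in>fst (\<Gamma>, Mem (Inf (set ls)) (App f ts)). holds A \<iota> \<phi>"
    have "set (map (eval A \<iota>) ts) \<subseteq> carrier A"
      using tT Exp.hyps(2) eval_carrier[OF alg a] by (auto simp: in_set_conv_nth)
    moreover have "length (map (eval A \<iota>) ts) = ar f" using Exp.hyps by simp
    ultimately have 1: "Inf (memb A ` set (map (eval A \<iota>) ts)) \<le> memb A (oper A f (map (eval A \<iota>) ts))"
      using alg Exp.hyps(1) unfolding is_algebra_def by blast
    have 2: "Inf (set ls) \<le> Inf (memb A ` set (map (eval A \<iota>) ts))"
    proof (rule Inf_greatest)
      fix y assume "y \<in> memb A ` set (map (eval A \<iota>) ts)"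
      then obtain i where i: "i < ar f" "y = memb A (eval A \<iota> (ts ! i))"
        using Exp.hyps(2) by (auto simp: in_set_conv_nth)
      then have "ls ! i \<le> y" using Exp.IH a g by fastforce
      moreover have "ls ! i \<in> set ls" using i Exp.hyps(3) by simp
      ultimately show "Inf (set ls) \<le> y" by (meson Inf_lower2)
    qed
    show "holds A \<iota> (snd (\<Gamma>, Mem (Inf (set ls)) (App f ts)))" using 1 2 by simp
  qed
next
  case (Sup \<Gamma> t S)
  then show ?case by (auto intro: Sup_least)
qed auto

lemma sound:
  assumes ft: "fuzzy_theory Ops ar C X \<Lambda>" and M: "is_model Ops ar C X A \<Lambda>"
    and "(\<Gamma>, \<psi>) \<in> deriv Ops ar C X \<Lambda>"
  shows "assignment X A \<iota> \<Longrightarrow> \<forall>\<phi>\<in>\<Gamma>. holds A \<iota> \<phi> \<Longrightarrow> holds A \<iota> \<psi>"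
  using sound0[OF assms] by auto

context
  fixes Ops :: "'f set" and ar :: "'f \<Rightarrow> nat" and C :: "'c set" and X :: "'v set"
    and \<Lambda> :: "(('h::complete_lattice,'f,'c,'v) fml set \<times> ('h,'f,'c,'v) fml) set"
  assumes ft: "fuzzy_theory Ops ar C X \<Lambda>"
begin

definition cls :: "('f,'c,'v) trm \<Rightarrow> ('f,'c,'v) trm set" where
  "cls t = {s \<in> Terms Ops ar C X. ({}, Eqn s t) \<in> deriv Ops ar C X \<Lambda>}"

definition rep :: "('f,'c,'v) trm set \<Rightarrow> ('f,'c,'v) trm" where
  "rep A = (SOME s. s \<in> Terms Ops ar C X \<and> A = cls s)"

definition TM :: "(('f,'c,'v) trm set,'h,'f,'c) alg" where
  "TM = \<lparr>carrier = cls ` Terms Ops ar C X,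
         memb = (\<lambda>A. Sup {l. \<exists>t\<in>A. ({}, Mem l t) \<in> deriv Ops ar C X \<Lambda>}),
         oper = (\<lambda>f as. cls (App f (map rep as))),
         cnst = (\<lambda>c. cls (Cst c))\<rparr>"

lemma carrier_TM: "carrier TM = cls ` Terms Ops ar C X"
  by (simp add: TM_def)

lemma refl0: "t \<in> Terms Ops ar C X \<Longrightarrow> ({}, Eqn t t) \<in> deriv Ops ar C X \<Lambda>"
  by (rule Refl) auto

lemma cls_eq:
  assumes "s \<in> Terms Ops ar C X" "t \<in> Terms Ops ar C X"
  shows "cls s = cls t \<longleftrightarrow> ({}, Eqn s t) \<in> deriv Ops ar C X \<Lambda>"
proof
  assume "cls s = cls t"
  then have "s \<in> cls t" using assms refl0 by (auto simp: cls_def)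
  then show "({}, Eqn s t) \<in> deriv Ops ar C X \<Lambda>" by (simp add: cls_def)
next
  assume h: "({}, Eqn s t) \<in> deriv Ops ar C X \<Lambda>"
  then have h': "({}, Eqn t s) \<in> deriv Ops ar C X \<Lambda>" by (rule Sym)
  show "cls s = cls t"
    unfolding cls_def using h h' by (auto intro: Trans)
qed

lemma rep:
  assumes "A \<in> cls ` Terms Ops ar C X"
  shows "rep A \<in> Terms Ops ar C X \<and> cls (rep A) = A"
proof -
  have "\<exists>s. s \<in> Terms Ops ar C X \<and> A = cls s" using assms by auto
  then have "rep A \<in> Terms Ops ar C X \<and> A = cls (rep A)"
    unfolding rep_def by (rule someI_ex)
  then show ?thesis by simp
qed

lemma memb_cls:
  assumes "t \<in> Terms Ops ar C X"
  shows "memb TM (cls t) = Sup {l. ({}, Mem l t) \<in> deriv Ops ar C X \<Lambda>}"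
proof -
  have "{l. \<exists>u\<in>cls t. ({}, Mem l u) \<in> deriv Ops ar C X \<Lambda>} = {l. ({}, Mem l t) \<in> deriv Ops ar C X \<Lambda>}"
  proof (intro equalityI subsetI)
    fix l assume "l \<in> {l. \<exists>u\<in>cls t. ({}, Mem l u) \<in> deriv Ops ar C X \<Lambda>}"
    then obtain u where "u \<in> cls t" "({}, Mem l u) \<in> deriv Ops ar C X \<Lambda>" by auto
    then show "l \<in> {l. ({}, Mem l t) \<in> deriv Ops ar C X \<Lambda>}"
      by (auto simp: cls_def intro: Fun)
  next
    fix l assume "l \<in> {l. ({}, Mem l t) \<in> deriv Ops ar C X \<Lambda>}"
    moreover have "t \<in> cls t" using assms refl0 by (auto simp: cls_def)
    ultimately show "l \<in> {l. \<exists>u\<in>cls t. ({}, Mem l u) \<in> deriv Ops ar C X \<Lambda>}" by auto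
  qed
  then show ?thesis by (simp add: TM_def)
qed

lemma Sup_der:
  assumes "t \<in> Terms Ops ar C X"
  shows "({}, Mem (Sup {l. ({}, Mem l t) \<in> deriv Ops ar C X \<Lambda>}) t) \<in> deriv Ops ar C X \<Lambda>"
  by (rule deriv.Sup) (use assms in auto)

lemma mem_iff:
  assumes "t \<in> Terms Ops ar C X"
  shows "l \<le> Sup {l. ({}, Mem l t) \<in> deriv Ops ar C X \<Lambda>} \<longleftrightarrow> ({}, Mem l t) \<in> deriv Ops ar C X \<Lambda>"
proof
  assume h: "l \<le> Sup {l. ({}, Mem l t) \<in> deriv Ops ar C X \<Lambda>}"
  have "({}, Mem (inf (Sup {l. ({}, Mem l t) \<in> deriv Ops ar C X \<Lambda>}) l) t) \<in> deriv Ops ar C X \<Lambda>"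
    by (rule Mon[OF Sup_der[OF assms]])
  moreover have "inf (Sup {l. ({}, Mem l t) \<in> deriv Ops ar C X \<Lambda>}) l = l" using h by (simp add: inf_absorb2)
  ultimately show "({}, Mem l t) \<in> deriv Ops ar C X \<Lambda>" by simp
qed (auto intro: Sup_upper)

lemma TM_alg: "is_algebra Ops ar C TM"
  unfolding is_algebra_def
proof (intro conjI ballI allI impI)
  fix c assume "c \<in> C"
  then show "cnst TM c \<in> carrier TM" by (auto simp: TM_def intro: TCst)
next
  fix f as assume f: "f \<in> Ops" and as: "length as = ar f \<and> set as \<subseteq> carrier TM"
  let ?ts = "map rep as"
  have repT: "\<forall>a\<in>set as. rep a \<in> Terms Ops ar C X \<and> cls (rep a) = a"
    using as rep by (auto simp: TM_def)
  have appT: "App f ?ts \<in> Terms Ops ar C X"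
    using f as repT by (auto intro!: TApp)
  then show "oper TM f as \<in> carrier TM" by (simp add: TM_def)
  let ?ls = "map (memb TM) as"
  have "\<forall>i<ar f. ({}, Mem (?ls ! i) (?ts ! i)) \<in> deriv Ops ar C X \<Lambda>"
  proof (intro allI impI)
    fix i assume i: "i < ar f"
    then have ai: "as ! i \<in> set as" using as by simp
    then have "memb TM (as ! i) = memb TM (cls (rep (as ! i)))" using repT by simp
    also have "\<dots> = Sup {l. ({}, Mem l (rep (as ! i))) \<in> deriv Ops ar C X \<Lambda>}"
      using repT ai memb_cls by blast
    finally show "({}, Mem (?ls ! i) (?ts ! i)) \<in> deriv Ops ar C X \<Lambda>"
      using i as Sup_der repT ai by auto
  qed
  then have "({}, Mem (Inf (set ?ls)) (App f ?ts)) \<in> deriv Ops ar C X \<Lambda>"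
    using f as by (intro Exp) auto
  then have "Inf (set ?ls) \<le> memb TM (cls (App f ?ts))"
    using memb_cls[OF appT] mem_iff[OF appT] by simp
  then show "Inf (memb TM ` set as) \<le> memb TM (oper TM f as)" by (simp add: TM_def)
qed

lemma eval_TM:
  assumes "t \<in> Terms Ops ar C X" and s: "\<forall>x\<in>X. \<sigma> x \<in> Terms Ops ar C X \<and> \<iota> x = cls (\<sigma> x)"
  shows "eval TM \<iota> t = cls (tsubst \<sigma> t)"
  using assms(1)
proof (induction rule: Terms.induct)
  case (TVar x) then show ?case using s by simp
next
  case (TCst c) then show ?case by (simp add: TM_def)
next
  case (TApp f ts)
  have sT: "\<forall>x\<in>X. \<sigma> x \<in> Terms Ops ar C X" using s by auto
  have "eval TM \<iota> (App f ts) = cls (App f (map rep (map (\<lambda>t. cls (tsubst \<sigma> t)) ts)))"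
    using TApp by (simp add: TM_def cong: map_cong)
  also have "\<dots> = cls (App f (map (tsubst \<sigma>) ts))"
  proof (subst cls_eq)
    have uT: "\<forall>t\<in>set ts. tsubst \<sigma> t \<in> Terms Ops ar C X" using TApp sT tsubst_Terms by blast
    then have r: "\<forall>t\<in>set ts. rep (cls (tsubst \<sigma> t)) \<in> Terms Ops ar C X \<and>
         cls (rep (cls (tsubst \<sigma> t))) = cls (tsubst \<sigma> t)" using rep by blast
    show "App f (map rep (map (\<lambda>t. cls (tsubst \<sigma> t)) ts)) \<in> Terms Ops ar C X"
      using TApp r by (auto intro!: Terms.TApp)
    show "App f (map (tsubst \<sigma>) ts) \<in> Terms Ops ar C X"
      using TApp uT by (auto intro!: Terms.TApp)
    show "({}, Eqn (App f (map rep (map (\<lambda>t. cls (tsubst \<sigma> t)) ts))) (App f (map (tsubst \<sigma>) ts)))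
        \<in> deriv Ops ar C X \<Lambda>"
    proof (rule Cong)
      show "f \<in> Ops" "length (map rep (map (\<lambda>t. cls (tsubst \<sigma> t)) ts)) = ar f"
        "length (map (tsubst \<sigma>) ts) = ar f" using TApp by auto
      show "\<forall>i<ar f. ({}, Eqn (map rep (map (\<lambda>t. cls (tsubst \<sigma> t)) ts) ! i) (map (tsubst \<sigma>) ts ! i))
          \<in> deriv Ops ar C X \<Lambda>"
      proof (intro allI impI)
        fix i assume i: "i < ar f"
        then have "ts ! i \<in> set ts" using TApp by simp
        then have "cls (rep (cls (tsubst \<sigma> (ts ! i)))) = cls (tsubst \<sigma> (ts ! i))"
          and "rep (cls (tsubst \<sigma> (ts ! i))) \<in> Terms Ops ar C X"
          and "tsubst \<sigma> (ts ! i) \<in> Terms Ops ar C X" using r uT by auto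
        then show "({}, Eqn (map rep (map (\<lambda>t. cls (tsubst \<sigma> t)) ts) ! i) (map (tsubst \<sigma>) ts ! i))
          \<in> deriv Ops ar C X \<Lambda>" using i TApp cls_eq by auto
      qed
    qed
  qed
  finally show ?case by simp
qed

lemma holds_TM:
  assumes "\<phi> \<in> Fmls Ops ar C X" and s: "\<forall>x\<in>X. \<sigma> x \<in> Terms Ops ar C X \<and> \<iota> x = cls (\<sigma> x)"
  shows "holds TM \<iota> \<phi> \<longleftrightarrow> ({}, fsubst \<sigma> \<phi>) \<in> deriv Ops ar C X \<Lambda>"
proof (cases \<phi>)
  case (Eqn u v)
  have sT: "\<forall>x\<in>X. \<sigma> x \<in> Terms Ops ar C X" using s by auto
  show ?thesis using assms Eqn eval_TM[OF _ s] cls_eq tsubst_Terms[OF _ sT] by simp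
next
  case (Mem l u)
  have sT: "\<forall>x\<in>X. \<sigma> x \<in> Terms Ops ar C X" using s by auto
  have uT: "tsubst \<sigma> u \<in> Terms Ops ar C X" using assms Mem tsubst_Terms[OF _ sT] by simp
  show ?thesis using assms Mem eval_TM[OF _ s] memb_cls[OF uT] mem_iff[OF uT] by simp
qed

lemma TM_model: "is_model Ops ar C X TM \<Lambda>"
  unfolding is_model_def
proof (intro conjI ballI TM_alg)
  fix sq assume sq: "sq \<in> \<Lambda>"
  obtain \<Gamma> \<psi> where sqe: "sq = (\<Gamma>, \<psi>)" by (cases sq)
  have GF: "\<Gamma> \<subseteq> Fmls Ops ar C X" and pF: "\<psi> \<in> Fmls Ops ar C X"
    using ft sq unfolding sqe fuzzy_theory_def by blast+
  show "satisfies_seq X TM sq"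
    unfolding satisfies_seq_def sqe fst_conv snd_conv
  proof (intro allI impI)
    fix \<iota> assume a: "assignment X TM \<iota>" and g: "\<forall>\<phi>\<in>\<Gamma>. holds TM \<iota> \<phi>"
    define \<sigma> where "\<sigma> x = (if x \<in> X then rep (\<iota> x) else Var x)" for x
    have s: "\<forall>x\<in>X. \<sigma> x \<in> Terms Ops ar C X \<and> \<iota> x = cls (\<sigma> x)"
    proof
      fix x assume x: "x \<in> X"
      then have "\<iota> x \<in> cls ` Terms Ops ar C X" using a unfolding assignment_def TM_def by simp
      then show "\<sigma> x \<in> Terms Ops ar C X \<and> \<iota> x = cls (\<sigma> x)" using rep x unfolding \<sigma>_def by simp
    qed
    have sT: "\<forall>x\<in>X. \<sigma> x \<in> Terms Ops ar C X" using s by auto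
    have d1: "(fsubst \<sigma> ` \<Gamma>, fsubst \<sigma> \<psi>) \<in> deriv Ops ar C X \<Lambda>"
      using Sub[OF Ax[OF sq[unfolded sqe]] sT] .
    have d2: "\<forall>\<phi>\<in>fsubst \<sigma> ` \<Gamma>. ({}, \<phi>) \<in> deriv Ops ar C X \<Lambda>"
    proof
      fix \<phi>' assume "\<phi>' \<in> fsubst \<sigma> ` \<Gamma>"
      then obtain \<phi> where p: "\<phi> \<in> \<Gamma>" "\<phi>' = fsubst \<sigma> \<phi>" by blast
      have h: "holds TM \<iota> \<phi>" using g p by blast
      have F: "\<phi> \<in> Fmls Ops ar C X" using GF p by blast
      show "({}, \<phi>') \<in> deriv Ops ar C X \<Lambda>" using holds_TM[OF F s] h unfolding p(2) by simp
    qed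
    have "({}, fsubst \<sigma> \<psi>) \<in> deriv Ops ar C X \<Lambda>"
      by (rule Cut[OF empty_subsetI d2 d1])
    then show "holds TM \<iota> \<psi>" using holds_TM[OF pF s] by simp
  qed
qed

end

lemma tsubst_Var: "tsubst Var t = t"
  by (induction t) (auto intro: map_idI)

lemma fsubst_Var: "fsubst Var \<phi> = \<phi>"
  by (cases \<phi>) (auto simp: tsubst_Var)

theorem corollary26:
  fixes Ops :: "'f set" and ar :: "'f \<Rightarrow> nat" and C :: "'c set" and X :: "'v set"
    and \<Lambda> :: "(('h::complete_lattice,'f,'c,'v) fml set \<times> ('h,'f,'c,'v) fml) set"
    and \<phi> :: "('h,'f,'c,'v) fml"
  assumes "is_frame TYPE('h)"
    and "\<forall>f\<in>Ops. ar f \<ge> 1"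
    and "fuzzy_theory Ops ar C X \<Lambda>"
    and "\<phi> \<in> Fmls Ops ar C X"
  shows "(({}, \<phi>) \<in> deriv Ops ar C X \<Lambda> \<longrightarrow>
            (\<forall>\<A> :: ('a,'h,'f,'c) alg. is_model Ops ar C X \<A> \<Lambda> \<longrightarrow> valid X \<A> \<phi>))
       \<and> ((\<forall>\<A> :: (('f,'c,'v) trm set,'h,'f,'c) alg. is_model Ops ar C X \<A> \<Lambda> \<longrightarrow> valid X \<A> \<phi>)
            \<longrightarrow> ({}, \<phi>) \<in> deriv Ops ar C X \<Lambda>)"
proof (intro conjI impI allI)
  fix \<A> :: "('a,'h,'f,'c) alg"
  assume d: "({}, \<phi>) \<in> deriv Ops ar C X \<Lambda>" and m: "is_model Ops ar C X \<A> \<Lambda>"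
  show "valid X \<A> \<phi>" unfolding valid_def
    using sound[OF assms(3) m d] by auto
next
  assume h: "\<forall>\<A> :: (('f,'c,'v) trm set,'h,'f,'c) alg. is_model Ops ar C X \<A> \<Lambda> \<longrightarrow> valid X \<A> \<phi>"
  have "valid X (TM Ops ar C X \<Lambda>) \<phi>" using h TM_model[OF assms(3)] by blast
  moreover have s: "\<forall>x\<in>X. Var x \<in> Terms Ops ar C X \<and> (\<lambda>x. cls Ops ar C X \<Lambda> (Var x)) x = cls Ops ar C X \<Lambda> (Var x)"
    by (auto intro: TVar)
  moreover have "assignment X (TM Ops ar C X \<Lambda>) (\<lambda>x. cls Ops ar C X \<Lambda> (Var x))"
    unfolding assignment_def carrier_TM[OF assms(3)] by (auto intro: TVar)
  ultimately have "holds (TM Ops ar C X \<Lambda>) (\<lambda>x. cls Ops ar C X \<Lambda> (Var x)) \<phi>"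
    unfolding valid_def by blast
  then show "({}, \<phi>) \<in> deriv Ops ar C X \<Lambda>"
    using holds_TM[OF assms(3) assms(4) s] by (simp add: fsubst_Var)
qed

end
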